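(* For every $n\ge3$, every maximally even set of vertices of $C_n$ is a maximizer of $W$ on $C_n$. However, the converse fails: there exist $n$ and sets of vertices of $C_n$ that are maximizers of $W$ but are not maximally even.
   Context: $C_n$ has vertex set $\{0,\dots,n-1\}$ with $i$ adjacent to $i+1\bmod n$; $d$ is geodesic distance and $d^*(u,v)$ the least non-negative integer congruent to $v-u$ mod $n$. $W(A)=\sum_{\{u,v\}\subseteq A,u\ne v}d(u,v)$; $A$ is a maximizer of $W$ if $W(A)=\max\{W(B):|B|=|A|\}$. For $A=\{a_0<\dots<a_{m-1}\}$, $\mathrm{span}_A(a_i,a_j)$ is the least positive integer congruent to $j-i$ mod $m$, and $\sigma^*_k(A)=[\,d^*(u,v):u,v\in A,u\ne v,\mathrm{span}_A(u,v)=k\,]$. $A$ is maximally even if for each $1\le k\le m-1$ the set of values of $\sigma^*_k(A)$ is one integer or two consecutive integers. *)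

theory Defs
  imports Main "HOL-Number_Theory.Cong"
begin

text \<open>Cycle C_n: vertices 0..n-1 (natural numbers below n), i adjacent to i+1 mod n.\<close>

definition dstar :: "nat \<Rightarrow> nat \<Rightarrow> nat \<Rightarrow> nat" where
  "dstar n u v = nat ((int v - int u) mod int n)"

definition cdist :: "nat \<Rightarrow> nat \<Rightarrow> nat \<Rightarrow> nat" where
  "cdist n u v = min (dstar n u v) (dstar n v u)"

definition W :: "nat \<Rightarrow> nat set \<Rightarrow> nat" where
  "W n A = (\<Sum>p\<in>{(u, v). u \<in> A \<and> v \<in> A \<and> u < v}. cdist n (fst p) (snd p))"

definition is_maximizer :: "nat \<Rightarrow> nat set \<Rightarrow> bool" where
  "is_maximizer n A \<longleftrightarrow> A \<subseteq> {0..<n} \<and>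
     (\<forall>B. B \<subseteq> {0..<n} \<and> card B = card A \<longrightarrow> W n B \<le> W n A)"

definition idx :: "nat set \<Rightarrow> nat \<Rightarrow> nat" where
  "idx A u = card {x \<in> A. x < u}"

definition span :: "nat set \<Rightarrow> nat \<Rightarrow> nat \<Rightarrow> nat" where
  "span A u v = (LEAST k::nat. 0 < k \<and>
      [int k = int (idx A v) - int (idx A u)] (mod int (card A)))"

text \<open>Set of values of the multiset sigma*_k(A).\<close>
definition sigma_vals :: "nat \<Rightarrow> nat set \<Rightarrow> nat \<Rightarrow> nat set" where
  "sigma_vals n A k = {dstar n u v | u v. u \<in> A \<and> v \<in> A \<and> u \<noteq> v \<and> span A u v = k}"

definition maximally_even :: "nat \<Rightarrow> nat set \<Rightarrow> bool" where
  "maximally_even n A \<longleftrightarrow> A \<subseteq> {0..<n} \<and>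
     (\<forall>k. 1 \<le> k \<and> k \<le> card A - 1 \<longrightarrow>
        (\<exists>c. sigma_vals n A k = {c} \<or> sigma_vals n A k = {c, c + 1}))"

end

theory Submission
  imports Defs
begin

lemma enum_exists:
  assumes "finite B"
  obtains b where "\<And>i j. i < j \<Longrightarrow> j < card B \<Longrightarrow> b i < (b j::nat)" "b ` {..<card B} = B"
proof -
  let ?xs = "sorted_list_of_set B"
  have s: "sorted_wrt (<) ?xs" by (simp add: strict_sorted_list_of_set)
  have l: "length ?xs = card B" by (simp add: length_sorted_list_of_set)
  have st: "set ?xs = B" using assms by (simp add: set_sorted_list_of_set)
  show ?thesis
  proof
    show "\<And>i j. i < j \<Longrightarrow> j < card B \<Longrightarrow> ?xs ! i < ?xs ! j"
      using s l by (simp add: sorted_wrt_nth_less)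
    show "(!) ?xs ` {..<card B} = B" using st l
      by (metis atLeast_upt image_set map_nth set_map set_upt lessThan_atLeast0)
  qed
qed

locale en =
  fixes B :: "nat set" and b :: "nat \<Rightarrow> nat" and m :: nat
  assumes sm: "\<And>i j. i < j \<Longrightarrow> j < m \<Longrightarrow> b i < b j"
    and img: "b ` {..<m} = B"
begin

lemma inj: "inj_on b {..<m}"
  by (metis inj_onI lessThan_iff linorder_neqE_nat sm less_irrefl)

lemma cardB: "card B = m"
  using inj img card_image by fastforce

lemma finB: "finite B" using img by auto

lemma b_le_iff: "i < m \<Longrightarrow> j < m \<Longrightarrow> b i < b j \<longleftrightarrow> i < j"
  by (metis linorder_neqE_nat not_less_iff_gr_or_eq sm)

lemma idx_b: assumes "i < m" shows "idx B (b i) = i"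
proof -
  have "{x \<in> B. x < b i} = b ` {..<i}"
  proof
    show "{x \<in> B. x < b i} \<subseteq> b ` {..<i}"
    proof
      fix x assume "x \<in> {x \<in> B. x < b i}"
      then obtain j where j: "j < m" "x = b j" "b j < b i" using img by auto
      then show "x \<in> b ` {..<i}" using b_le_iff assms by auto
    qed
    show "b ` {..<i} \<subseteq> {x \<in> B. x < b i}" using img assms sm by auto
  qed
  moreover have "inj_on b {..<i}" using inj assms by (meson inj_on_subset lessThan_subset_iff less_imp_le)
  ultimately show ?thesis unfolding idx_def by (simp add: card_image)
qed

lemma span_b: assumes "i < m" "0 < k" "k < m"
  shows "span B (b i) (b ((i + k) mod m)) = k"
proof -
  have im: "(i + k) mod m < m" using assms by simp
  have c: "[int k' = int ((i + k) mod m) - int i] (mod int m) \<longleftrightarrow> [int k' = int k] (mod int m)" for k'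
  proof -
    have "int ((i + k) mod m) = (int i + int k) mod int m" by (simp add: zmod_int)
    then show ?thesis unfolding cong_def by (metis add_diff_cancel_left' mod_diff_left_eq)
  qed
  show ?thesis unfolding span_def idx_b[OF assms(1)] idx_b[OF im] cardB c
  proof (rule Least_equality)
    show "0 < k \<and> [int k = int k] (mod int m)" using assms by simp
    fix y assume y: "0 < y \<and> [int y = int k] (mod int m)"
    show "k \<le> y"
    proof (rule ccontr)
      assume "\<not> k \<le> y"
      then have "int m dvd int k - int y" using y by (simp add: cong_iff_dvd_diff dvd_diff_commute)
      then have "int m \<le> int k - int y" using \<open>\<not> k \<le> y\<close> by (intro zdvd_imp_le) auto
      then show False using assms y by linarith
    qed
  qed
qed

end


lemma dstar_val: "u < n \<Longrightarrow> v < n \<Longrightarrow>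
   int (dstar n u v) = (if u \<le> v then int v - int u else int v - int u + int n)"
proof -
  assume a: "u < n" "v < n"
  show ?thesis
  proof (cases "u \<le> v")
    case True
    then have "(int v - int u) mod int n = int v - int u" using a by (intro mod_pos_pos_trivial) auto
    then show ?thesis using True unfolding dstar_def by simp
  next
    case False
    have "(int v - int u) mod int n = (int v - int u + int n) mod int n" by simp
    also have "\<dots> = int v - int u + int n" using a False by (intro mod_pos_pos_trivial) auto
    finally show ?thesis using a False unfolding dstar_def by simp
  qed
qed

lemma dstar_lt: "0 < n \<Longrightarrow> dstar n u v < n"
  unfolding dstar_def by (simp add: nat_less_iff)

lemma dstar_swap: "u < n \<Longrightarrow> v < n \<Longrightarrow> u \<noteq> v \<Longrightarrow> dstar n v u = n - dstar n u v"
proof -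
  assume a: "u < n" "v < n" "u \<noteq> v"
  have "int (dstar n v u) = int n - int (dstar n u v)" using dstar_val[of u n v] dstar_val[of v n u] a
    by (auto split: if_splits)
  moreover have "dstar n u v < n" using a dstar_lt[of n] by auto
  ultimately show ?thesis by linarith
qed

lemma rot_bij: "0 < m \<Longrightarrow> bij_betw (\<lambda>i. (i + k) mod m) {..<m} {..<(m::nat)}"
proof -
  assume m: "0 < m"
  have "inj_on (\<lambda>i. (i + k) mod m) {..<m}"
  proof (rule inj_onI)
    fix x y assume "x \<in> {..<m}" "y \<in> {..<m}" "(x + k) mod m = (y + k) mod m"
    then have a: "x < m" "y < m" "(x + k) mod m = (y + k) mod m" by auto
    then have "[x + k = y + k] (mod m)" by (simp add: cong_def)
    then have "[x = y] (mod m)" by (simp add: cong_add_rcancel_nat)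
    then show "x = y" using a by (simp add: cong_def)
  qed
  moreover have "(\<lambda>i. (i + k) mod m) ` {..<m} \<subseteq> {..<m}" using m by auto
  ultimately show ?thesis
    by (simp add: bij_betw_def card_image card_subset_eq)
qed

locale en2 = en +
  fixes n :: nat
  assumes sub: "B \<subseteq> {0..<n}"
begin

lemma b_lt: "i < m \<Longrightarrow> b i < n" using img sub by auto

definition X where "X k i = int (dstar n (b i) (b ((i + k) mod m)))"

lemma X_val: assumes "i < m" "0 < k" "k < m"
  shows "X k i = int (b ((i + k) mod m)) - int (b i) + (if m \<le> i + k then int n else 0)"
proof -
  have j: "(i + k) mod m < m" using assms by simp
  have "b i \<le> b ((i + k) mod m) \<longleftrightarrow> \<not> m \<le> i + k"
  proof -
    have "b i \<le> b ((i + k) mod m) \<longleftrightarrow> i \<le> (i + k) mod m"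
      using b_le_iff[OF j assms(1)] by linarith
    also have "\<dots> \<longleftrightarrow> \<not> m \<le> i + k" using assms
      by (cases "m \<le> i + k") (auto simp: mod_if le_mod_geq)
    finally show ?thesis .
  qed
  then show ?thesis unfolding X_def using dstar_val[OF b_lt[OF assms(1)] b_lt[OF j]] by auto
qed

lemma sumX: assumes "0 < k" "k < m"
  shows "(\<Sum>i<m. X k i) = int (k * n)"
proof -
  have "(\<Sum>i<m. X k i) = (\<Sum>i<m. int (b ((i + k) mod m))) - (\<Sum>i<m. int (b i))
        + (\<Sum>i<m. (if m \<le> i + k then int n else 0))"
    using X_val assms by (simp add: sum.distrib sum_subtractf)
  also have "(\<Sum>i<m. int (b ((i + k) mod m))) = (\<Sum>i<m. int (b i))"
    using sum.reindex_bij_betw[OF rot_bij[of m k], of "\<lambda>i. int (b i)"] assms by simp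
  also have "(\<Sum>i<m. (if m \<le> i + k then int n else 0)) = int n * int (card ({..<m} \<inter> {i. m \<le> i + k}))"
    by (simp add: sum.If_cases)
  also have "({..<m} \<inter> {i. m \<le> i + k}) = {m - k..<m}" using assms by auto
  finally show ?thesis using assms by (simp add: of_nat_diff)
qed

lemma X_range: "i < m \<Longrightarrow> 0 \<le> X k i \<and> X k i \<le> int n"
proof -
  assume "i < m"
  then have "0 < n" using b_lt[of i] by linarith
  then have "dstar n (b i) (b ((i + k) mod m)) < n" by (rule dstar_lt)
  then show ?thesis unfolding X_def by simp
qed

end


definition ff :: "nat \<Rightarrow> int \<Rightarrow> int" where "ff n x = min x (int n - x)"

lemma cdist_sym: "cdist n u v = cdist n v u" unfolding cdist_def by simp

lemma mod_cancel_lt: "x < (m::nat) \<Longrightarrow> y < m \<Longrightarrow> (k + x) mod m = (k + y) mod m \<Longrightarrow> x = y"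
proof -
  assume a: "x < m" "y < m" "(k + x) mod m = (k + y) mod m"
  then have "[k + x = k + y] (mod m)" by (simp add: cong_def)
  then have "[x = y] (mod m)" by (simp add: cong_add_lcancel_nat)
  then show ?thesis using a by (simp add: cong_def)
qed

context en2
begin

lemma j_ne: assumes "i < m" "0 < k" "k < m" shows "(i + k) mod m \<noteq> i"
proof
  assume "(i + k) mod m = i"
  then have "(i + k) mod m = (i + 0) mod m" using assms by simp
  then show False using mod_cancel_lt[of k m 0 i] assms by (simp add: add.commute)
qed

lemma cdist_X: assumes "i < m" "0 < k" "k < m"
  shows "int (cdist n (b i) (b ((i + k) mod m))) = ff n (X k i)"
proof -
  have j: "(i + k) mod m < m" using assms by simp
  have ne: "b i \<noteq> b ((i + k) mod m)"
  proof
    assume "b i = b ((i + k) mod m)"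
    then have "i = (i + k) mod m" using inj_onD[OF inj] j assms(1) by auto
    then show False using j_ne[OF assms] by simp
  qed
  have "dstar n (b ((i + k) mod m)) (b i) = n - dstar n (b i) (b ((i + k) mod m))"
    using dstar_swap[OF b_lt[OF assms(1)] b_lt[OF j] ne] .
  moreover have "dstar n (b i) (b ((i + k) mod m)) < n" using dstar_lt[of n] b_lt[OF assms(1)] by simp
  ultimately show ?thesis unfolding cdist_def ff_def X_def by (simp add: of_nat_diff)
qed

definition Off where "Off = {(u, v). u \<in> B \<and> v \<in> B \<and> u \<noteq> v}"

lemma Off_bij: "bij_betw (\<lambda>(k, i). (b i, b ((i + k) mod m))) ({1..<m} \<times> {..<m}) Off"
  unfolding bij_betw_def
proof
  show "inj_on (\<lambda>(k, i). (b i, b ((i + k) mod m))) ({1..<m} \<times> {..<m})"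
  proof (rule inj_onI)
    fix p q assume pq: "p \<in> {1..<m} \<times> {..<m}" "q \<in> {1..<m} \<times> {..<m}"
      "(\<lambda>(k, i). (b i, b ((i + k) mod m))) p = (\<lambda>(k, i). (b i, b ((i + k) mod m))) q"
    obtain k i k' i' where pp: "p = (k, i)" "q = (k', i')" by (cases p, cases q) auto
    have a: "k \<in> {1..<m}" "i \<in> {..<m}" "k' \<in> {1..<m}" "i' \<in> {..<m}"
      "b i = b i'" "b ((i + k) mod m) = b ((i' + k') mod m)" using pq unfolding pp by auto
    have ii: "i = i'" using a inj_onD[OF inj] by auto
    have m0: "0 < m" using a by auto
    have "(i + k) mod m = (i + k') mod m" using a(6) inj_onD[OF inj] ii m0 by auto
    then show "p = q" unfolding pp using mod_cancel_lt[of k m k' i] a ii by auto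
  qed
  show "(\<lambda>(k, i). (b i, b ((i + k) mod m))) ` ({1..<m} \<times> {..<m}) = Off"
  proof
    show "(\<lambda>(k, i). (b i, b ((i + k) mod m))) ` ({1..<m} \<times> {..<m}) \<subseteq> Off"
    proof (rule image_subsetI)
      fix p assume p: "p \<in> {1..<m} \<times> {..<m}"
      obtain k i where pp: "p = (k, i)" by (cases p) auto
      have a: "k \<in> {1..<m}" "i \<in> {..<m}" using p pp by auto
      then have j: "(i + k) mod m < m" by auto
      have "b i \<noteq> b ((i + k) mod m)"
      proof
        assume "b i = b ((i + k) mod m)"
        then have "i = (i + k) mod m" using inj_onD[OF inj] j a by auto
        then show False using j_ne[of i k] a by auto
      qed
      then show "(\<lambda>(k, i). (b i, b ((i + k) mod m))) p \<in> Off" unfolding Off_def pp using img a j by auto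
    qed
    show "Off \<subseteq> (\<lambda>(k, i). (b i, b ((i + k) mod m))) ` ({1..<m} \<times> {..<m})"
    proof clarify
      fix u v assume "(u, v) \<in> Off"
      then obtain i j where ij: "i < m" "j < m" "u = b i" "v = b j" "i \<noteq> j"
        unfolding Off_def using img by auto
      define k where "k = (j + m - i) mod m"
      have k1: "k < m" using ij unfolding k_def by simp
      have k2: "(i + k) mod m = j"
      proof -
        have "(i + k) mod m = (i + (j + m - i)) mod m" unfolding k_def by (simp add: mod_add_right_eq)
        also have "i + (j + m - i) = j + m" using ij by simp
        finally show ?thesis using ij by simp
      qed
      have k3: "1 \<le> k" using k2 ij by (cases "k = 0") auto
      show "(u, v) \<in> (\<lambda>(k, i). (b i, b ((i + k) mod m))) ` ({1..<m} \<times> {..<m})"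
        using k1 k2 k3 ij by (intro image_eqI[of _ _ "(k, i)"]) auto
    qed
  qed
qed

lemma W_decomp: "2 * int (W n B) = (\<Sum>k\<in>{1..<m}. \<Sum>i<m. ff n (X k i))"
proof -
  define Lt where "Lt = {(u, v). u \<in> B \<and> v \<in> B \<and> u < v}"
  have "Off \<subseteq> B \<times> B" unfolding Off_def by auto
  then have fin: "finite Off" using finB finite_subset by blast
  have Off_eq: "Off = Lt \<union> prod.swap ` Lt" unfolding Off_def Lt_def by auto
  have disj: "Lt \<inter> prod.swap ` Lt = {}" unfolding Lt_def by auto
  have finL: "finite Lt" using fin Off_eq by auto
  have "(\<Sum>p\<in>Off. cdist n (fst p) (snd p)) = (\<Sum>p\<in>Lt. cdist n (fst p) (snd p)) + (\<Sum>p\<in>prod.swap ` Lt. cdist n (fst p) (snd p))"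
    unfolding Off_eq using finL disj by (simp add: sum.union_disjoint)
  also have "(\<Sum>p\<in>prod.swap ` Lt. cdist n (fst p) (snd p)) = (\<Sum>p\<in>Lt. cdist n (snd p) (fst p))"
    by (subst sum.reindex) (auto simp: inj_on_def)
  also have "\<dots> = (\<Sum>p\<in>Lt. cdist n (fst p) (snd p))"
    by (intro sum.cong refl) (rule cdist_sym)
  finally have 1: "(\<Sum>p\<in>Off. cdist n (fst p) (snd p)) = 2 * W n B" unfolding W_def Lt_def by simp
  have "(\<Sum>p\<in>Off. cdist n (fst p) (snd p)) = (\<Sum>(k, i)\<in>{1..<m} \<times> {..<m}. cdist n (b i) (b ((i + k) mod m)))"
    using sum.reindex_bij_betw[OF Off_bij, of "\<lambda>p. cdist n (fst p) (snd p)"]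
    by (simp add: case_prod_beta)
  also have "\<dots> = (\<Sum>k\<in>{1..<m}. \<Sum>i<m. cdist n (b i) (b ((i + k) mod m)))"
    by (simp add: sum.cartesian_product)
  finally have 2: "2 * W n B = (\<Sum>k\<in>{1..<m}. \<Sum>i<m. cdist n (b i) (b ((i + k) mod m)))"
    using 1 by simp
  have "2 * int (W n B) = int (2 * W n B)" by simp
  also have "\<dots> = (\<Sum>k\<in>{1..<m}. \<Sum>i<m. int (cdist n (b i) (b ((i + k) mod m))))"
    unfolding 2 by simp
  also have "\<dots> = (\<Sum>k\<in>{1..<m}. \<Sum>i<m. ff n (X k i))"
    by (intro sum.cong refl) (simp add: cdist_X)
  finally show ?thesis .
qed

end


lemma ff_concave:
  assumes "0 \<le> x" "x \<le> int n" "0 \<le> q" "q + 1 \<le> int n"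
  shows "ff n x \<le> ff n q + (ff n (q + 1) - ff n q) * (x - q)"
proof (cases "2 * (q + 1) \<le> int n")
  case True
  then have "ff n q = q" "ff n (q + 1) = q + 1" unfolding ff_def by auto
  then show ?thesis unfolding ff_def by simp
next
  case F: False
  show ?thesis
  proof (cases "int n \<le> 2 * q")
    case True
    then have "ff n q = int n - q" "ff n (q + 1) = int n - q - 1" unfolding ff_def by auto
    then show ?thesis unfolding ff_def by simp
  next
    case False
    then have "int n = 2 * q + 1" using F by simp
    then have "ff n q = q" "ff n (q + 1) = q" unfolding ff_def by auto
    then show ?thesis unfolding ff_def using \<open>int n = 2 * q + 1\<close> by simp
  qed
qed

definition G :: "nat \<Rightarrow> nat \<Rightarrow> nat \<Rightarrow> int" where
  "G n m k = (let q = int (k * n div m) in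
     int m * ff n q + (ff n (q + 1) - ff n q) * (int (k * n) - int m * q))"

lemma divc: "0 < (m::int) \<Longrightarrow> m * c \<le> s \<Longrightarrow> s < m * c + m \<Longrightarrow> s div m = c"
proof -
  assume a: "0 < m" "m * c \<le> s" "s < m * c + m"
  have "s div m = ((s - m * c) + c * m) div m" by (simp add: mult.commute)
  also have "\<dots> = c + (s - m * c) div m" by (rule div_mult_self1) (use a in simp)
  also have "(s - m * c) div m = 0" using a by (intro div_pos_pos_trivial) auto
  finally show ?thesis by simp
qed

lemma q_bound: assumes "0 < (k::nat)" "k < m" "0 < n" shows "k * n div m + 1 \<le> n"
proof -
  have "k * n < m * n" using assms by (simp add: mult_less_cancel2)
  then have "k * n div m < n" using assms by (simp add: div_less_iff_less_mult mult.commute)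
  then show ?thesis by simp
qed

lemma G_bound:
  assumes x: "\<And>i. i < m \<Longrightarrow> 0 \<le> x i \<and> x i \<le> int n"
    and s: "(\<Sum>i<m. x i) = int (k * n)" and k: "0 < k" "k < m" and n: "0 < n"
  shows "(\<Sum>i<m. ff n (x i)) \<le> G n m k"
proof -
  define q where "q = int (k * n div m)"
  have q: "0 \<le> q" "q + 1 \<le> int n" using q_bound[OF k n] unfolding q_def by auto
  have "(\<Sum>i<m. ff n (x i)) \<le> (\<Sum>i<m. ff n q + (ff n (q + 1) - ff n q) * (x i - q))"
    by (intro sum_mono ff_concave) (use x q in auto)
  also have "\<dots> = int m * ff n q + (ff n (q + 1) - ff n q) * ((\<Sum>i<m. x i) - int m * q)"
    by (simp add: sum.distrib sum_distrib_left sum_subtractf right_diff_distrib)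
  also have "\<dots> = G n m k" unfolding G_def Let_def q_def[symmetric] s ..
  finally show ?thesis .
qed

lemma G_eq:
  assumes x: "\<And>i. i < m \<Longrightarrow> x i = c \<or> x i = c + 1"
    and s: "(\<Sum>i<m. x i) = int (k * n)" and k: "0 < k" "k < m"
  shows "(\<Sum>i<m. ff n (x i)) = G n m k"
proof -
  define q where "q = int (k * n div m)"
  have qq: "int (k * n) div int m = q" unfolding q_def by (simp add: zdiv_int)
  have xq: "x i = q \<or> x i = q + 1" if "i < m" for i
  proof (cases "\<exists>j<m. x j = c")
    case True
    then obtain j where j: "j < m" "x j = c" by auto
    have xle: "\<And>i. i < m \<Longrightarrow> x i \<le> c + 1" using x by force
    have "(\<Sum>i<m. x i) = x j + (\<Sum>i\<in>{..<m} - {j}. x i)" using j by (simp add: sum.remove)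
    also have "\<dots> \<le> c + (\<Sum>i\<in>{..<m} - {j}. c + 1)" using j xle by (intro add_mono sum_mono) auto
    also have "\<dots> = c + (int m - 1) * (c + 1)" using j by (simp add: of_nat_diff)
    finally have up: "int (k * n) \<le> c + (int m - 1) * (c + 1)" using s by simp
    have "int m * c = (\<Sum>i<m. c)" by simp
    also have "\<dots> \<le> (\<Sum>i<m. x i)" using x by (intro sum_mono) force
    finally have lo: "int m * c \<le> int (k * n)" using s by simp
    have "int (k * n) div int m = c"
      using up lo k by (intro divc) (auto simp: algebra_simps)
    then have "q = c" using qq by simp
    then show ?thesis using x that by auto
  next
    case False
    then have all: "\<And>i. i < m \<Longrightarrow> x i = c + 1" using x by auto
    then have "(\<Sum>i<m. x i) = int m * (c + 1)" by simp
    then have "int (k * n) div int m = c + 1" using s k by simp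
    then have "q = c + 1" using qq by simp
    then show ?thesis using all that by auto
  qed
  have "(\<Sum>i<m. ff n (x i)) = (\<Sum>i<m. ff n q + (ff n (q + 1) - ff n q) * (x i - q))"
    by (intro sum.cong refl) (use xq in fastforce)
  also have "\<dots> = int m * ff n q + (ff n (q + 1) - ff n q) * ((\<Sum>i<m. x i) - int m * q)"
    by (simp add: sum.distrib sum_distrib_left sum_subtractf right_diff_distrib)
  also have "\<dots> = G n m k" unfolding G_def Let_def q_def[symmetric] s ..
  finally show ?thesis .
qed



lemma W_le_bound:
  assumes sub: "B \<subseteq> {0..<n}" and n: "0 < n"
  shows "2 * int (W n B) \<le> (\<Sum>k\<in>{1..<card B}. G n (card B) k)"
proof -
  have fin: "finite B" using sub finite_subset by blast
  obtain b where sm: "\<And>i j. i < j \<Longrightarrow> j < card B \<Longrightarrow> b i < b j" and img: "b ` {..<card B} = B"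
    using enum_exists[OF fin] by blast
  interpret E: en2 B b "card B" n
    by unfold_locales (use sm img sub in auto)
  have "2 * int (W n B) = (\<Sum>k\<in>{1..<card B}. \<Sum>i<card B. ff n (E.X k i))" by (rule E.W_decomp)
  also have "\<dots> \<le> (\<Sum>k\<in>{1..<card B}. G n (card B) k)"
  proof (intro sum_mono)
    fix k assume k: "k \<in> {1..<card B}"
    show "(\<Sum>i<card B. ff n (E.X k i)) \<le> G n (card B) k"
      by (rule G_bound) (use k n E.X_range E.sumX in auto)
  qed
  finally show ?thesis .
qed

lemma W_eq_bound:
  assumes sub: "A \<subseteq> {0..<n}" and n: "0 < n" and me: "maximally_even n A"
  shows "2 * int (W n A) = (\<Sum>k\<in>{1..<card A}. G n (card A) k)"
proof -
  have fin: "finite A" using sub finite_subset by blast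
  obtain b where sm: "\<And>i j. i < j \<Longrightarrow> j < card A \<Longrightarrow> b i < b j" and img: "b ` {..<card A} = A"
    using enum_exists[OF fin] by blast
  interpret E: en2 A b "card A" n
    by unfold_locales (use sm img sub in auto)
  have "2 * int (W n A) = (\<Sum>k\<in>{1..<card A}. \<Sum>i<card A. ff n (E.X k i))" by (rule E.W_decomp)
  also have "\<dots> = (\<Sum>k\<in>{1..<card A}. G n (card A) k)"
  proof (intro sum.cong refl)
    fix k assume k: "k \<in> {1..<card A}"
    obtain c where c: "sigma_vals n A k = {c} \<or> sigma_vals n A k = {c, c + 1}"
      using me k unfolding maximally_even_def by force
    have "E.X k i = int c \<or> E.X k i = int c + 1" if i: "i < card A" for i
    proof -
      have j: "(i + k) mod card A < card A" using i by simp
      have ne: "b i \<noteq> b ((i + k) mod card A)"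
      proof
        assume "b i = b ((i + k) mod card A)"
        then have "i = (i + k) mod card A" using inj_onD[OF E.inj] j i by auto
        then show False using E.j_ne[of i k] i k by auto
      qed
      have "dstar n (b i) (b ((i + k) mod card A)) \<in> sigma_vals n A k"
        unfolding sigma_vals_def using ne E.span_b[of i k] i k j img by force
      then show ?thesis using c unfolding E.X_def by auto
    qed
    then show "(\<Sum>i<card A. ff n (E.X k i)) = G n (card A) k"
      by (intro G_eq[where c = "int c"]) (use k E.sumX in auto)
  qed
  finally show ?thesis .
qed

theorem part1:
  assumes "3 \<le> n" "A \<subseteq> {0..<n}" "maximally_even n A"
  shows "is_maximizer n A"
  unfolding is_maximizer_def
proof (intro conjI allI impI)
  show "A \<subseteq> {0..<n}" by fact
  fix B assume B: "B \<subseteq> {0..<n} \<and> card B = card A"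
  have "2 * int (W n B) \<le> 2 * int (W n A)"
    using W_le_bound[of B n] W_eq_bound[of A n] assms B by auto
  then show "W n B \<le> W n A" by simp
qed



definition bex :: "nat \<Rightarrow> nat" where "bex i = (if i = 0 then 0 else if i = 1 then 1 else 3)"

lemma three: "{..<3::nat} = {0, 1, 2}" by auto

lemma ex_en: "en {0, 1, 3} bex 3"
proof
  show "\<And>i j. i < j \<Longrightarrow> j < 3 \<Longrightarrow> bex i < bex j" unfolding bex_def by auto
  show "bex ` {..<3} = {0, 1, 3}" unfolding three bex_def by auto
qed

lemma W_ex: "W 6 {0, 1, 3} = 6"
proof -
  have "{(u, v). u \<in> {0::nat, 1, 3} \<and> v \<in> {0, 1, 3} \<and> u < v} = {(0, 1), (0, 3), (1, 3)}" by auto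
  then show ?thesis unfolding W_def by (simp add: cdist_def dstar_def)
qed

lemma not_me: "\<not> maximally_even 6 {0, 1, 3}"
proof
  assume me: "maximally_even 6 {0, 1, 3}"
  interpret E: en "{0, 1, 3}" bex 3 by (rule ex_en)
  have c3: "card {0::nat, 1, 3} = 3" by simp
  have s1: "span {0, 1, 3} 0 1 = 1" using E.span_b[of 0 1] by (simp add: bex_def)
  have s2: "span {0, 1, 3} 3 0 = 1" using E.span_b[of 2 1] by (simp add: bex_def)
  have v1: "1 \<in> sigma_vals 6 {0, 1, 3} 1"
    unfolding sigma_vals_def using s1 by (intro CollectI exI[of _ 0] exI[of _ 1]) (simp add: dstar_def)
  have v3: "3 \<in> sigma_vals 6 {0, 1, 3} 1"
    unfolding sigma_vals_def using s2 by (intro CollectI exI[of _ 3] exI[of _ 0]) (simp add: dstar_def)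
  obtain c where "sigma_vals 6 {0, 1, 3} 1 = {c} \<or> sigma_vals 6 {0, 1, 3} 1 = {c, c + 1}"
    using me c3 unfolding maximally_even_def by force
  then show False using v1 v3 by auto
qed

lemma part2: "is_maximizer 6 {0, 1, 3}"
  unfolding is_maximizer_def
proof (intro conjI allI impI)
  show "{0::nat, 1, 3} \<subseteq> {0..<6}" by auto
  fix B :: "nat set" assume B: "B \<subseteq> {0..<6} \<and> card B = card {0::nat, 1, 3}"
  then have cB: "card B = 3" by simp
  have "2 * int (W 6 B) \<le> (\<Sum>k\<in>{1..<card B}. G 6 (card B) k)" by (rule W_le_bound) (use B in auto)
  then have "2 * int (W 6 B) \<le> (\<Sum>k\<in>{1..<3}. G 6 3 k)" unfolding cB .
  also have "(\<Sum>k\<in>{1..<3}. G 6 3 k) = 12"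
  proof -
    have "{1..<3::nat} = {1, 2}" by auto
    then show ?thesis by (simp add: G_def ff_def)
  qed
  finally show "W 6 B \<le> W 6 {0, 1, 3}" using W_ex by simp
qed

theorem mainTheorem15:
  shows "(\<forall>n\<ge>3. \<forall>A. A \<subseteq> {0..<n} \<and> maximally_even n A \<longrightarrow> is_maximizer n A)
       \<and> (\<exists>n\<ge>3. \<exists>A. A \<subseteq> {0..<n} \<and> is_maximizer n A \<and> \<not> maximally_even n A)"
proof
  show "\<forall>n\<ge>3. \<forall>A. A \<subseteq> {0..<n} \<and> maximally_even n A \<longrightarrow> is_maximizer n A"
    using part1 by blast
  show "\<exists>n\<ge>3. \<exists>A. A \<subseteq> {0..<n} \<and> is_maximizer n A \<and> \<not> maximally_even n A"
    using part2 not_me by (intro exI[of _ 6] conjI exI[of _ "{0, 1, 3}"]) auto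
qed


end
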